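(* There exists $z_0>0$, depending only on $\mathcal{D}$, such that $$\int_\Omega|\nabla u|^2\,dx\ \ge\ z_0\int_\Omega|u|^2\,dx\qquad\text{for all }u\in H^1_0(\Omega).$$
   Context: Geometric setting (standing assumptions). Work in $\mathbb{R}^2$. Let $D^{(1)},\dots,D^{(N_{\mathrm{type}})}$ be finitely many bounded simply connected open sets with $C^1$ boundaries, each of area $1$. For each $n$ let $\Lambda^{(n)}\subset\mathbb{R}^2$ be a discrete set, $\mathcal{D}:=\bigcup_n\bigcup_{\bm u\in\Lambda^{(n)}}(\bm u+D^{(n)})$ (the resonators), and $\Omega:=\mathbb{R}^2\setminus\overline{\mathcal{D}}$. Assume: (i) there is $c>0$ such that any two distinct resonators (connected components of $\mathcal{D}$) are at distance $\ge c$; (ii) with a lattice $\Lambda=\{m\mathring{\bm v}_1+n\mathring{\bm v}_2\}$, there are finitely many polygons $Y^{(1)},\dots,Y^{(M_{\mathrm{poly}})}$ and sets $\Sigma^{(m)}\subset\Lambda$ such that the translates $\bm v+Y^{(m)}$ ($\bm v\in\Sigma^{(m)}$) are pairwise disjoint and their closures cover $\mathbb{R}^2$; (iii) each translate $\bm v+Y^{(m)}$ contains exactly $K\ge1$ resonators, $(\bm v+Y^{(m)})\cap\mathcal{D}$ is compactly contained in $\bm v+Y^{(m)}$, and $\operatorname{dist}(\partial(\bm v+Y^{(m)}),\mathcal{D})\ge c$. *)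

theory Defs
  imports "HOL-Analysis.Analysis"
begin

type_synonym pt = "real^2"

definition C1_boundary :: "pt set \<Rightarrow> bool" where
  "C1_boundary D \<longleftrightarrow>
     (\<forall>p\<in>frontier D. \<exists>r>0. \<exists>(Q::pt \<Rightarrow> pt) (f::real \<Rightarrow> real). orthogonal_transformation Q \<and>
        f C1_differentiable_on UNIV \<and>
        (\<forall>x\<in>ball p r. x \<in> D \<longleftrightarrow> (Q (x - p)) $ 2 < f ((Q (x - p)) $ 1)))"

definition discrete_set :: "pt set \<Rightarrow> bool" where
  "discrete_set S \<longleftrightarrow> (\<forall>r. finite (S \<inter> cball 0 r))"

definition polygon :: "pt set \<Rightarrow> bool" where
  "polygon Y \<longleftrightarrow> open Y \<and> bounded Y \<and> connected Y \<and> Y \<noteq> {} \<and>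
     (\<exists>S. finite S \<and> frontier Y = (\<Union>(a,b)\<in>S. closed_segment a b))"

definition lattice_gen :: "pt \<Rightarrow> pt \<Rightarrow> pt set" where
  "lattice_gen v1 v2 = {of_int m *\<^sub>R v1 + of_int n *\<^sub>R v2 | m n. True}"

definition partial_d :: "2 \<Rightarrow> (pt \<Rightarrow> complex) \<Rightarrow> pt \<Rightarrow> complex" where
  "partial_d i f x = frechet_derivative f (at x) (axis i 1)"

fun iter_partial :: "2 list \<Rightarrow> (pt \<Rightarrow> complex) \<Rightarrow> pt \<Rightarrow> complex" where
  "iter_partial [] f = f"
| "iter_partial (i # is) f = partial_d i (iter_partial is f)"

definition smooth_fun :: "(pt \<Rightarrow> complex) \<Rightarrow> bool" where
  "smooth_fun f \<longleftrightarrow> (\<forall>is x. iter_partial is f differentiable (at x))"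

definition test_fun :: "pt set \<Rightarrow> (pt \<Rightarrow> complex) \<Rightarrow> bool" where
  "test_fun \<Omega> \<phi> \<longleftrightarrow> smooth_fun \<phi> \<and> compact (closure {x. \<phi> x \<noteq> 0}) \<and>
      closure {x. \<phi> x \<noteq> 0} \<subseteq> \<Omega>"

text \<open>u \<in> H^1_0(\<Omega>) with (weak) gradient g: u, g square integrable on \<Omega> and they are the
  H^1-limit of smooth compactly supported functions in \<Omega>.\<close>
definition H10_grad :: "pt set \<Rightarrow> (pt \<Rightarrow> complex) \<Rightarrow> (pt \<Rightarrow> complex^2) \<Rightarrow> bool" where
  "H10_grad \<Omega> u g \<longleftrightarrow>
     set_borel_measurable lborel \<Omega> u \<and> set_borel_measurable lborel \<Omega> g \<and>
     set_integrable lborel \<Omega> (\<lambda>x. (cmod (u x))^2) \<and>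
     (\<forall>i. set_integrable lborel \<Omega> (\<lambda>x. (cmod (g x $ i))^2)) \<and>
     (\<exists>\<phi>. (\<forall>n. test_fun \<Omega> (\<phi> n)) \<and>
        (\<lambda>n. LINT x:\<Omega>|lborel. (cmod (\<phi> n x - u x))^2) \<longlonglongrightarrow> 0 \<and>
        (\<forall>i. (\<lambda>n. LINT x:\<Omega>|lborel. (cmod (partial_d i (\<phi> n) x - g x $ i))^2) \<longlonglongrightarrow> 0))"

definition in_H10 :: "pt set \<Rightarrow> (pt \<Rightarrow> complex) \<Rightarrow> bool" where
  "in_H10 \<Omega> u \<longleftrightarrow> (\<exists>g. H10_grad \<Omega> u g)"

end

theory Submission
  imports Defs
begin

definition gsq :: "(pt \<Rightarrow> complex) \<Rightarrow> pt \<Rightarrow> real" where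
  "gsq \<phi> x = (\<Sum>i\<in>UNIV. (cmod (partial_d i \<phi> x))^2)"

lemma smooth_diff: "smooth_fun \<phi> \<Longrightarrow> \<phi> differentiable (at x)"
  unfolding smooth_fun_def by (metis iter_partial.simps(1))

lemma smooth_partial_diff: "smooth_fun \<phi> \<Longrightarrow> partial_d i \<phi> differentiable (at x)"
  unfolding smooth_fun_def by (metis iter_partial.simps)

lemma smooth_cont: "smooth_fun \<phi> \<Longrightarrow> continuous_on UNIV \<phi>"
  by (meson continuous_at_imp_continuous_on differentiable_imp_continuous_within smooth_diff)

lemma smooth_partial_cont: "smooth_fun \<phi> \<Longrightarrow> continuous_on UNIV (partial_d i \<phi>)"
  by (meson continuous_at_imp_continuous_on differentiable_imp_continuous_within smooth_partial_diff)

lemma gsq_cont: "smooth_fun \<phi> \<Longrightarrow> continuous_on UNIV (gsq \<phi>)"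
  unfolding gsq_def
  by (intro continuous_intros continuous_on_norm smooth_partial_cont)

lemma frechet_expand:
  assumes "\<phi> differentiable (at x)"
  shows "frechet_derivative \<phi> (at x) w = (\<Sum>i\<in>UNIV. (w$i) *\<^sub>R partial_d i \<phi> x)"
proof -
  have lin: "linear (frechet_derivative \<phi> (at x))"
    using assms frechet_derivative_works has_derivative_linear by blast
  have "w = (\<Sum>i\<in>UNIV. (w$i) *\<^sub>R axis i (1::real))"
    by (metis (no_types, lifting) basis_expansion scalar_mult_eq_scaleR sum.cong)
  then have "frechet_derivative \<phi> (at x) w = frechet_derivative \<phi> (at x) (\<Sum>i\<in>UNIV. (w$i) *\<^sub>R axis i (1::real))"
    by simp
  also have "\<dots> = (\<Sum>i\<in>UNIV. (w$i) *\<^sub>R frechet_derivative \<phi> (at x) (axis i 1))"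
    using lin by (simp add: linear_sum linear_scale)
  finally show ?thesis unfolding partial_d_def .
qed

lemma cs2: "(cmod ((\<Sum>i\<in>UNIV. (w$i) *\<^sub>R (a i)) :: complex))^2 \<le> (norm (w::pt))^2 * (\<Sum>i\<in>UNIV. (cmod (a i))^2)"
proof -
  have n: "(norm w)^2 = (w$1)^2 + (w$2)^2"
    by (simp add: norm_vec_def L2_set_def sum_2)
  have "cmod (\<Sum>i\<in>UNIV. (w$i) *\<^sub>R (a i)) \<le> \<bar>w$1\<bar> * cmod (a 1) + \<bar>w$2\<bar> * cmod (a 2)"
    by (simp add: sum_2) (metis norm_scaleR norm_triangle_le order_refl)
  then have "(cmod (\<Sum>i\<in>UNIV. (w$i) *\<^sub>R (a i)))^2 \<le> (\<bar>w$1\<bar> * cmod (a 1) + \<bar>w$2\<bar> * cmod (a 2))^2"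
    by (simp add: power_mono)
  also have "\<dots> \<le> ((w$1)^2 + (w$2)^2) * ((cmod (a 1))^2 + (cmod (a 2))^2)"
  proof -
    have "0 \<le> (\<bar>w$1\<bar> * cmod (a 2) - \<bar>w$2\<bar> * cmod (a 1))^2" by simp
    then show ?thesis by (simp add: power2_eq_square algebra_simps)
  qed
  finally show ?thesis using n by (simp add: sum_2)
qed


lemma jensen01:
  fixes f :: "real \<Rightarrow> real"
  assumes c: "continuous_on {0..1} f"
  shows "(integral {0..1} f)^2 \<le> integral {0..1} (\<lambda>t. (f t)^2)"
proof -
  define a where "a = integral {0..1} f"
  define b where "b = integral {0..1} (\<lambda>t. (f t)^2)"
  have fa: "(f has_integral a) {0..1}" unfolding a_def
    using c integrable_continuous_real integrable_integral by blast
  have c2: "continuous_on {0..1} (\<lambda>t. (f t)^2)" using c by (intro continuous_intros)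
  have fb: "((\<lambda>t. (f t)^2) has_integral b) {0..1}" unfolding b_def
    using c2 integrable_continuous_real integrable_integral by blast
  have k: "((\<lambda>t::real. a^2) has_integral a^2) {0..1}"
    using has_integral_const_real[of "a^2" 0 1] by simp
  have "((\<lambda>t. (f t)^2 - (2*a) * f t + a^2) has_integral (b - (2*a)*a + a^2)) {0..1}"
    by (intro has_integral_add has_integral_diff has_integral_mult_right fa fb k)
  then have "0 \<le> b - (2*a)*a + a^2"
  proof (rule has_integral_nonneg)
    fix t
    have "(f t)^2 - (2*a) * f t + a^2 = (f t - a)^2" by (simp add: power2_diff)
    then show "0 \<le> (f t)^2 - (2*a) * f t + a^2" by simp
  qed
  then show ?thesis unfolding a_def[symmetric] b_def[symmetric] by (simp add: power2_eq_square)
qed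

lemma line_bound:
  assumes sm: "smooth_fun \<phi>" and z: "\<phi> (x + w) = 0"
  shows "(cmod (\<phi> x))^2 \<le> (norm w)^2 * integral {0..1} (\<lambda>t. gsq \<phi> (x + t *\<^sub>R w))"
proof -
  define h where "h t = \<phi> (x + t *\<^sub>R w)" for t :: real
  define D where "D t = (\<Sum>i\<in>UNIV. (w$i) *\<^sub>R partial_d i \<phi> (x + t *\<^sub>R w))" for t :: real
  have der: "(h has_vector_derivative D t) (at t within {0..1})" for t
  proof -
    have d1: "((\<lambda>t. x + t *\<^sub>R w) has_vector_derivative w) (at t within {0..1})"
      by (auto intro!: derivative_eq_intros)
    have d2: "(\<phi> has_derivative frechet_derivative \<phi> (at (x + t *\<^sub>R w))) (at (x + t *\<^sub>R w) within (\<lambda>t. x + t *\<^sub>R w) ` {0..1})"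
      using sm smooth_diff frechet_derivative_works has_derivative_at_withinI by blast
    have "((\<phi> \<circ> (\<lambda>t. x + t *\<^sub>R w)) has_vector_derivative frechet_derivative \<phi> (at (x + t *\<^sub>R w)) w) (at t within {0..1})"
      using d1 d2 vector_derivative_diff_chain_within by blast
    then show ?thesis
      unfolding h_def D_def frechet_expand[OF smooth_diff[OF sm]] by (simp add: o_def)
  qed
  have Dc: "continuous_on {0..1} D"
    unfolding D_def
    by (intro continuous_intros continuous_on_compose2[OF smooth_partial_cont[OF sm]]) auto
  have "(D has_integral (h 1 - h 0)) {0..1}"
    by (rule fundamental_theorem_of_calculus) (auto intro: der)
  then have "integral {0..1} D = - \<phi> x" using z unfolding h_def by (simp add: integral_unique)
  then have "cmod (\<phi> x) = norm (integral {0..1} D)" by simp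
  also have "\<dots> \<le> integral {0..1} (\<lambda>t. norm (D t))"
    by (intro integral_norm_bound_integral integrable_continuous_real Dc continuous_intros) auto
  finally have 1: "cmod (\<phi> x) \<le> integral {0..1} (\<lambda>t. norm (D t))" .
  have "(cmod (\<phi> x))^2 \<le> (integral {0..1} (\<lambda>t. norm (D t)))^2"
    using 1 by (simp add: power_mono)
  also have "\<dots> \<le> integral {0..1} (\<lambda>t. (norm (D t))^2)"
    by (intro jensen01 continuous_intros Dc)
  also have "\<dots> \<le> integral {0..1} (\<lambda>t. (norm w)^2 * gsq \<phi> (x + t *\<^sub>R w))"
  proof (rule integral_le)
    show "(\<lambda>t. (norm (D t))^2) integrable_on {0..1}"
      by (intro integrable_continuous_real Dc continuous_intros)
    show "(\<lambda>t. (norm w)^2 * gsq \<phi> (x + t *\<^sub>R w)) integrable_on {0..1}"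
      by (intro integrable_continuous_real continuous_intros continuous_on_compose2[OF gsq_cont[OF sm]]) auto
    show "(norm (D t))^2 \<le> (norm w)^2 * gsq \<phi> (x + t *\<^sub>R w)" for t
      unfolding D_def gsq_def by (rule cs2)
  qed
  also have "\<dots> = (norm w)^2 * integral {0..1} (\<lambda>t. gsq \<phi> (x + t *\<^sub>R w))"
    by simp
  finally show ?thesis .
qed


lemma gsq_meas[measurable]: "smooth_fun \<phi> \<Longrightarrow> gsq \<phi> \<in> borel_measurable borel"
  by (intro borel_measurable_continuous_onI gsq_cont)

lemma gsq_nonneg: "0 \<le> gsq \<phi> x"
  unfolding gsq_def by (simp add: sum_nonneg)

lemma line_nn:
  assumes sm: "smooth_fun \<phi>"
  shows "ennreal (integral {0..1} (\<lambda>t. gsq \<phi> (x + t *\<^sub>R w)))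
          = (\<integral>\<^sup>+t. ennreal (indicator {0..1} t * gsq \<phi> (x + t *\<^sub>R w)) \<partial>lborel)"
proof -
  have int: "(\<lambda>t. gsq \<phi> (x + t *\<^sub>R w)) integrable_on {0..1}"
    by (intro integrable_continuous_real continuous_intros continuous_on_compose2[OF gsq_cont[OF sm]]) auto
  have "((\<lambda>t. indicator {0..1} t * gsq \<phi> (x + t *\<^sub>R w)) has_integral integral {0..1} (\<lambda>t. gsq \<phi> (x + t *\<^sub>R w))) UNIV"
  proof -
    have e: "(\<lambda>t. indicator {0..1} t * gsq \<phi> (x + t *\<^sub>R w)) = (\<lambda>t. if t \<in> {0..1::real} then gsq \<phi> (x + t *\<^sub>R w) else 0)"
      by (auto simp: fun_eq_iff)
    show ?thesis unfolding e has_integral_restrict_UNIV using int[THEN integrable_integral] .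
  qed
  then have "integral\<^sup>N lborel (\<lambda>t. indicator {0..1} t * gsq \<phi> (x + t *\<^sub>R w)) = integral {0..1} (\<lambda>t. gsq \<phi> (x + t *\<^sub>R w))"
    by (intro nn_integral_has_integral_lborel) (use sm in \<open>auto simp: gsq_nonneg\<close>)
  then show ?thesis by simp
qed

lemma shift_integral:
  assumes sm: "smooth_fun \<phi>"
  shows "(\<integral>\<^sup>+x. ennreal (integral {0..1} (\<lambda>t. gsq \<phi> (x + t *\<^sub>R w))) \<partial>lborel) = (\<integral>\<^sup>+x. ennreal (gsq \<phi> x) \<partial>lborel)"
proof -
  have tr: "(\<integral>\<^sup>+x. ennreal (gsq \<phi> (x + c)) \<partial>lborel) = (\<integral>\<^sup>+x. ennreal (gsq \<phi> x) \<partial>lborel)" for c :: pt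
  proof -
    have "(\<integral>\<^sup>+x. ennreal (gsq \<phi> x) \<partial>lborel) = (\<integral>\<^sup>+x. ennreal (gsq \<phi> x) \<partial>(distr lborel borel ((+) c)))"
      by (simp add: lborel_distr_plus)
    also have "\<dots> = (\<integral>\<^sup>+x. ennreal (gsq \<phi> (c + x)) \<partial>lborel)"
      by (subst nn_integral_distr) (use sm in auto)
    finally show ?thesis by (simp add: add.commute)
  qed
  have "(\<integral>\<^sup>+x. ennreal (integral {0..1} (\<lambda>t. gsq \<phi> (x + t *\<^sub>R w))) \<partial>lborel)
      = (\<integral>\<^sup>+x. (\<integral>\<^sup>+t. ennreal (indicator {0..1} t * gsq \<phi> (x + t *\<^sub>R w)) \<partial>lborel) \<partial>lborel)"
    by (simp add: line_nn[OF sm])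
  also have "\<dots> = (\<integral>\<^sup>+t. (\<integral>\<^sup>+x. ennreal (indicator {0..1} t * gsq \<phi> (x + t *\<^sub>R w)) \<partial>lborel) \<partial>lborel)"
    by (rule lborel_pair.Fubini') (use sm in measurable)
  also have "\<dots> = (\<integral>\<^sup>+t. indicator {0..1::real} t * (\<integral>\<^sup>+x. ennreal (gsq \<phi> x) \<partial>lborel) \<partial>lborel)"
  proof (rule nn_integral_cong)
    fix t :: real
    have "(\<integral>\<^sup>+x. ennreal (indicator {0..1} t * gsq \<phi> (x + t *\<^sub>R w)) \<partial>lborel)
        = (\<integral>\<^sup>+x. ennreal (indicator {0..1} t) * ennreal (gsq \<phi> (x + t *\<^sub>R w)) \<partial>lborel)"
      by (simp add: ennreal_mult gsq_nonneg)
    also have "\<dots> = ennreal (indicator {0..1} t) * (\<integral>\<^sup>+x. ennreal (gsq \<phi> (x + t *\<^sub>R w)) \<partial>lborel)"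
      by (rule nn_integral_cmult) (use sm in measurable)
    also have "\<dots> = indicator {0..1} t * (\<integral>\<^sup>+x. ennreal (gsq \<phi> x) \<partial>lborel)"
      by (simp add: tr indicator_def)
    finally show "(\<integral>\<^sup>+x. ennreal (indicator {0..1} t * gsq \<phi> (x + t *\<^sub>R w)) \<partial>lborel) = indicator {0..1} t * (\<integral>\<^sup>+x. ennreal (gsq \<phi> x) \<partial>lborel)" .
  qed
  also have "\<dots> = (\<integral>\<^sup>+x. ennreal (gsq \<phi> x) \<partial>lborel)"
    by (subst mult.commute, subst nn_integral_cmult_indicator) auto
  finally show ?thesis .
qed


lemma poinc_nn:
  assumes sm: "smooth_fun \<phi>" and fin: "finite F" and cov: "\<And>x. \<exists>w\<in>F. \<phi> (x + w) = 0"
  shows "(\<integral>\<^sup>+x. ennreal ((cmod (\<phi> x))^2) \<partial>lborel) \<le> ennreal (\<Sum>w\<in>F. (norm w)^2) * (\<integral>\<^sup>+x. ennreal (gsq \<phi> x) \<partial>lborel)"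
proof -
  define I where "I w x = (\<integral>\<^sup>+t. ennreal (indicator {0..1} t * gsq \<phi> (x + t *\<^sub>R w)) \<partial>lborel)" for w x
  have Imeas: "I w \<in> borel_measurable lborel" for w
    unfolding I_def using sm by measurable
  have pw: "ennreal ((cmod (\<phi> x))^2) \<le> (\<Sum>w\<in>F. ennreal ((norm w)^2) * I w x)" for x
  proof -
    obtain w where w: "w \<in> F" "\<phi> (x + w) = 0" using cov by blast
    have "(cmod (\<phi> x))^2 \<le> (norm w)^2 * integral {0..1} (\<lambda>t. gsq \<phi> (x + t *\<^sub>R w))"
      by (rule line_bound[OF sm w(2)])
    then have "ennreal ((cmod (\<phi> x))^2) \<le> ennreal ((norm w)^2 * integral {0..1} (\<lambda>t. gsq \<phi> (x + t *\<^sub>R w)))"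
      using ennreal_leI by blast
    also have "\<dots> = ennreal ((norm w)^2) * I w x"
    proof -
      have "0 \<le> integral {0..1} (\<lambda>t. gsq \<phi> (x + t *\<^sub>R w))"
        by (intro integral_nonneg integrable_continuous_real continuous_intros continuous_on_compose2[OF gsq_cont[OF sm]])
           (auto simp: gsq_nonneg)
      then show ?thesis unfolding I_def line_nn[OF sm, symmetric] by (simp add: ennreal_mult)
    qed
    also have "\<dots> \<le> (\<Sum>w\<in>F. ennreal ((norm w)^2) * I w x)"
      by (rule member_le_sum) (use w fin in auto)
    finally show ?thesis .
  qed
  have "(\<integral>\<^sup>+x. ennreal ((cmod (\<phi> x))^2) \<partial>lborel) \<le> (\<integral>\<^sup>+x. (\<Sum>w\<in>F. ennreal ((norm w)^2) * I w x) \<partial>lborel)"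
    by (rule nn_integral_mono) (rule pw)
  also have "\<dots> = (\<Sum>w\<in>F. (\<integral>\<^sup>+x. ennreal ((norm w)^2) * I w x \<partial>lborel))"
    by (rule nn_integral_sum) (use Imeas in auto)
  also have "\<dots> = (\<Sum>w\<in>F. ennreal ((norm w)^2) * (\<integral>\<^sup>+x. ennreal (gsq \<phi> x) \<partial>lborel))"
  proof (rule sum.cong)
    fix w assume "w \<in> F"
    have "(\<integral>\<^sup>+x. ennreal ((norm w)^2) * I w x \<partial>lborel) = ennreal ((norm w)^2) * (\<integral>\<^sup>+x. I w x \<partial>lborel)"
      by (rule nn_integral_cmult) (rule Imeas)
    also have "(\<integral>\<^sup>+x. I w x \<partial>lborel) = (\<integral>\<^sup>+x. ennreal (gsq \<phi> x) \<partial>lborel)"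
      unfolding I_def line_nn[OF sm, symmetric] by (rule shift_integral[OF sm])
    finally show "(\<integral>\<^sup>+x. ennreal ((norm w)^2) * I w x \<partial>lborel) = ennreal ((norm w)^2) * (\<integral>\<^sup>+x. ennreal (gsq \<phi> x) \<partial>lborel)" .
  qed simp
  also have "\<dots> = ennreal (\<Sum>w\<in>F. (norm w)^2) * (\<integral>\<^sup>+x. ennreal (gsq \<phi> x) \<partial>lborel)"
    by (simp add: sum_distrib_right[symmetric])
  finally show ?thesis .
qed


lemma test_smooth: "test_fun \<Omega> \<phi> \<Longrightarrow> smooth_fun \<phi>"
  unfolding test_fun_def by blast

lemma test_zero: "test_fun \<Omega> \<phi> \<Longrightarrow> x \<notin> \<Omega> \<Longrightarrow> \<phi> x = 0"
proof (rule ccontr)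
  assume tf: "test_fun \<Omega> \<phi>" and x: "x \<notin> \<Omega>" and nz: "\<phi> x \<noteq> 0"
  have "x \<in> closure {x. \<phi> x \<noteq> 0}" using nz closure_subset[of "{x. \<phi> x \<noteq> 0}"] by auto
  then show False using tf x unfolding test_fun_def by auto
qed

lemma partial_zero:
  assumes sm: "smooth_fun \<phi>" and x: "x \<notin> closure {x. \<phi> x \<noteq> 0}"
  shows "partial_d i \<phi> x = 0"
proof -
  let ?T = "- closure {x. \<phi> x \<noteq> 0}"
  have T: "open ?T" "x \<in> ?T" using x by (simp_all add: open_Compl)
  have z: "\<phi> y = 0" if "y \<in> ?T" for y
  proof (rule ccontr)
    assume "\<phi> y \<noteq> 0"
    then have "y \<in> closure {x. \<phi> x \<noteq> 0}" by (meson closure_subset mem_Collect_eq subsetD)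
    then show False using that by simp
  qed
  have d0: "(\<phi> has_derivative (\<lambda>h. 0)) (at x)"
  proof (rule has_derivative_transform_within_open[where f="\<lambda>_. (0::complex)" and s="?T"])
    show "((\<lambda>_. (0::complex)) has_derivative (\<lambda>h. 0)) (at x)" by (rule has_derivative_const)
    show "open ?T" by (rule T(1))
    show "x \<in> ?T" by (rule T(2))
    show "\<And>y. y \<in> ?T \<Longrightarrow> 0 = \<phi> y" using z by metis
  qed
  have d1: "(\<phi> has_derivative frechet_derivative \<phi> (at x)) (at x)"
    using smooth_diff[OF sm] frechet_derivative_works by blast
  have "frechet_derivative \<phi> (at x) = (\<lambda>h. 0)" by (rule has_derivative_unique[OF d1 d0])
  then show ?thesis unfolding partial_d_def by simp
qed

lemma test_gsq_zero: "test_fun \<Omega> \<phi> \<Longrightarrow> x \<notin> \<Omega> \<Longrightarrow> gsq \<phi> x = 0"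
proof -
  assume tf: "test_fun \<Omega> \<phi>" and x: "x \<notin> \<Omega>"
  have s: "closure {x. \<phi> x \<noteq> 0} \<subseteq> \<Omega>" "smooth_fun \<phi>" using tf unfolding test_fun_def by simp_all
  then have "x \<notin> closure {x. \<phi> x \<noteq> 0}" "smooth_fun \<phi>" using x by (meson subsetD, simp)
  then show ?thesis unfolding gsq_def using partial_zero by simp
qed

lemma test_int_phi:
  assumes tf: "test_fun \<Omega> \<phi>"
  shows "integrable lborel (\<lambda>x. (cmod (\<phi> x))^2)"
proof -
  let ?S = "closure {x. \<phi> x \<noteq> 0}"
  have "integrable lborel (\<lambda>x. indicator ?S x *\<^sub>R (cmod (\<phi> x))^2)"
    using tf unfolding test_fun_def
    by (intro borel_integrable_compact continuous_intros continuous_on_subset[OF smooth_cont]) auto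
  moreover have "(\<lambda>x. indicator ?S x *\<^sub>R (cmod (\<phi> x))^2) = (\<lambda>x. (cmod (\<phi> x))^2)"
    using closure_subset[of "{x. \<phi> x \<noteq> 0}"] by (intro ext) (auto simp: indicator_def)
  ultimately show ?thesis by metis
qed

lemma test_int_gsq:
  assumes tf: "test_fun \<Omega> \<phi>"
  shows "integrable lborel (gsq \<phi>)"
proof -
  let ?S = "closure {x. \<phi> x \<noteq> 0}"
  have sm: "smooth_fun \<phi>" using tf test_smooth by blast
  have "integrable lborel (\<lambda>x. indicator ?S x *\<^sub>R gsq \<phi> x)"
    using tf unfolding test_fun_def
    by (intro borel_integrable_compact continuous_on_subset[OF gsq_cont]) auto
  moreover have "(\<lambda>x. indicator ?S x *\<^sub>R gsq \<phi> x) = gsq \<phi>"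
    using partial_zero[OF sm] by (intro ext) (auto simp: gsq_def indicator_def)
  ultimately show ?thesis by metis
qed

lemma poinc_real:
  assumes tf: "test_fun \<Omega> \<phi>" and fin: "finite F" and cov: "\<And>x. \<exists>w\<in>F. \<phi> (x + w) = 0"
  shows "(\<integral>x. (cmod (\<phi> x))^2 \<partial>lborel) \<le> (\<Sum>w\<in>F. (norm w)^2) * (\<integral>x. gsq \<phi> x \<partial>lborel)"
proof -
  have sm: "smooth_fun \<phi>" using tf test_smooth by blast
  have "ennreal (\<integral>x. (cmod (\<phi> x))^2 \<partial>lborel) = (\<integral>\<^sup>+x. ennreal ((cmod (\<phi> x))^2) \<partial>lborel)"
    by (rule nn_integral_eq_integral[symmetric]) (use test_int_phi[OF tf] in auto)
  also have "\<dots> \<le> ennreal (\<Sum>w\<in>F. (norm w)^2) * (\<integral>\<^sup>+x. ennreal (gsq \<phi> x) \<partial>lborel)"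
    by (rule poinc_nn[OF sm fin cov])
  also have "(\<integral>\<^sup>+x. ennreal (gsq \<phi> x) \<partial>lborel) = ennreal (\<integral>x. gsq \<phi> x \<partial>lborel)"
    by (rule nn_integral_eq_integral) (use test_int_gsq[OF tf] in \<open>auto simp: gsq_nonneg\<close>)
  also have "ennreal (\<Sum>w\<in>F. (norm w)^2) * ennreal (\<integral>x. gsq \<phi> x \<partial>lborel) = ennreal ((\<Sum>w\<in>F. (norm w)^2) * (\<integral>x. gsq \<phi> x \<partial>lborel))"
    by (rule ennreal_mult[symmetric]) (auto intro!: sum_nonneg Bochner_Integration.integral_nonneg simp: gsq_nonneg)
  finally show ?thesis
    by (subst (asm) ennreal_le_iff) (auto intro!: mult_nonneg_nonneg sum_nonneg integral_nonneg simp: gsq_nonneg)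
qed


lemma net_exists:
  assumes rho: "0 < \<rho>"
  shows "\<exists>F. finite F \<and> (\<forall>v::pt. norm v \<le> R \<longrightarrow> (\<exists>w\<in>F. dist v w < \<rho>))"
proof -
  have cv: "cball (0::pt) R \<subseteq> (\<Union>c\<in>cball 0 R. ball c \<rho>)"
    using rho by force
  obtain C' where C': "C' \<subseteq> cball 0 R" "finite C'" "cball (0::pt) R \<subseteq> (\<Union>c\<in>C'. ball c \<rho>)"
    by (rule compactE_image[OF compact_cball[of "0::pt" R] open_ball cv])
  show ?thesis
  proof (intro exI conjI allI impI)
    show "finite C'" by (rule C'(2))
    fix v :: pt assume "norm v \<le> R"
    then have "v \<in> cball 0 R" by simp
    then obtain c where "c \<in> C'" "v \<in> ball c \<rho>" using C'(3) by blast
    then show "\<exists>w\<in>C'. dist v w < \<rho>" by (metis dist_commute mem_ball)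
  qed
qed

lemma geom:
  fixes Ntype :: nat and D :: "nat \<Rightarrow> pt set" and Lam :: "nat \<Rightarrow> pt set"
    and M :: nat and Y :: "nat \<Rightarrow> pt set"
    and Sig :: "nat \<Rightarrow> pt set" and K :: nat and DD :: "pt set"
  assumes shapes: "\<forall>n<Ntype. bounded (D n) \<and> open (D n) \<and> simply_connected (D n) \<and>
                     C1_boundary (D n) \<and> measure lborel (D n) = 1"
    and DD_def: "DD = (\<Union>n<Ntype. \<Union>u\<in>Lam n. (+) u ` D n)"
    and polys: "\<forall>m<M. polygon (Y m)"
    and cover: "(\<Union>m<M. \<Union>v\<in>Sig m. closure ((+) v ` Y m)) = UNIV"
    and K_pos: "K \<ge> 1"
    and cellK: "\<forall>m<M. \<forall>v\<in>Sig m. card {A \<in> components DD. A \<subseteq> (+) v ` Y m} = K"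
  shows "\<exists>F. finite F \<and> (\<forall>x. \<exists>w\<in>F. x + w \<in> DD)"
proof -
  have "\<forall>n<Ntype. \<exists>qr. 0 < snd qr \<and> ball (fst qr) (snd qr) \<subseteq> D n"
  proof (intro allI impI)
    fix n assume n: "n < Ntype"
    then have o: "open (D n)" and m1: "measure lborel (D n) = 1" using shapes by auto
    have "D n \<noteq> {}" using m1 by auto
    then obtain q where q: "q \<in> D n" by blast
    then obtain r where "0 < r" "ball q r \<subseteq> D n" using o openE by blast
    then show "\<exists>qr. 0 < snd qr \<and> ball (fst qr) (snd qr) \<subseteq> D n" by (intro exI[of _ "(q, r)"]) simp
  qed
  then obtain qr where qr: "\<forall>n<Ntype. 0 < snd (qr n) \<and> ball (fst (qr n)) (snd (qr n)) \<subseteq> D n"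
    by metis
  define q where "q n = fst (qr n)" for n
  define r where "r n = snd (qr n)" for n
  have qr': "0 < r n" "ball (q n) (r n) \<subseteq> D n" if "n < Ntype" for n
    using qr that unfolding q_def r_def by auto
  define R where "R = (\<Sum>m<M. diameter (closure (Y m)))"
  have diamR: "diameter (closure (Y m)) \<le> R" if "m < M" for m
    unfolding R_def
    by (rule member_le_sum) (use that polys in \<open>auto intro!: diameter_ge_0 simp: polygon_def\<close>)
  have "\<forall>n<Ntype. \<exists>F. finite F \<and> (\<forall>v::pt. norm v \<le> R \<longrightarrow> (\<exists>w\<in>F. dist v w < r n))"
    using net_exists qr' by blast
  then obtain Fs where Fs: "\<forall>n<Ntype. finite (Fs n) \<and> (\<forall>v::pt. norm v \<le> R \<longrightarrow> (\<exists>w\<in>Fs n. dist v w < r n))"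
    by metis
  define F where "F = (\<Union>n<Ntype. Fs n)"
  have finF: "finite F" unfolding F_def using Fs by auto
  have cov: "\<exists>w\<in>F. x + w \<in> DD" for x
  proof -
    have "x \<in> (\<Union>m<M. \<Union>v\<in>Sig m. closure ((+) v ` Y m))" using cover by simp
    then obtain m v where m: "m < M" and v: "v \<in> Sig m" and xc: "x \<in> closure ((+) v ` Y m)" by blast
    have "card {A \<in> components DD. A \<subseteq> (+) v ` Y m} = K" using cellK m v by blast
    then have "{A \<in> components DD. A \<subseteq> (+) v ` Y m} \<noteq> {}" using K_pos by (metis card.empty not_one_le_zero)
    then obtain A where A: "A \<in> components DD" "A \<subseteq> (+) v ` Y m" by blast
    obtain a where a: "a \<in> A" using in_components_nonempty[OF A(1)] by blast
    have "a \<in> DD" using in_components_subset[OF A(1)] a by blast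
    then obtain n u where n: "n < Ntype" and u: "u \<in> Lam n" and au: "a \<in> (+) u ` D n"
      unfolding DD_def by blast
    have "simply_connected (D n)" using shapes n by blast
    then have "path_connected ((\<lambda>x. u + x) ` D n)"
      by (intro path_connected_translationI simply_connected_imp_path_connected)
    then have conn: "connected ((+) u ` D n)" by (simp add: path_connected_imp_connected)
    have sub: "(+) u ` D n \<subseteq> DD" unfolding DD_def using n u by blast
    have "(+) u ` D n \<subseteq> A"
      by (rule components_maximal[OF A(1) conn sub]) (use a au in blast)
    define p where "p = u + q n"
    have ballp: "ball p (r n) \<subseteq> DD"
    proof
      fix y assume "y \<in> ball p (r n)"
      then have "y - u \<in> ball (q n) (r n)" unfolding p_def by (simp add: dist_norm algebra_simps)
      then have "y - u \<in> D n" using qr'(2)[OF n] by blast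
      then have "y \<in> (+) u ` D n" by (metis add.commute diff_add_cancel image_eqI)
      then show "y \<in> DD" using sub by blast
    qed
    have "q n \<in> D n" using qr'[OF n] by (meson centre_in_ball subsetD)
    then have "p \<in> (+) u ` D n" unfolding p_def by blast
    then have pA: "p \<in> (+) v ` Y m" using \<open>(+) u ` D n \<subseteq> A\<close> A(2) by blast
    have "bounded (Y m)" using polys m unfolding polygon_def by blast
    then have bY: "bounded (closure (Y m))" by (rule bounded_closure)
    have xv: "x - v \<in> closure (Y m)" using xc closure_translation[of v "Y m"] by auto
    have pv: "p - v \<in> closure (Y m)" using pA closure_subset[of "Y m"] by auto
    have "dist x p = dist (x - v) (p - v)" by (simp add: dist_norm)
    also have "\<dots> \<le> diameter (closure (Y m))" by (rule diameter_bounded_bound[OF bY xv pv])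
    also have "\<dots> \<le> R" by (rule diamR[OF m])
    finally have "norm (p - x) \<le> R" by (simp add: dist_norm norm_minus_commute)
    then obtain w where w: "w \<in> Fs n" "dist (p - x) w < r n" using Fs n by blast
    have "x + w \<in> ball p (r n)" using w(2) by (simp add: dist_norm algebra_simps)
    then have "x + w \<in> DD" using ballp by blast
    moreover have "w \<in> F" unfolding F_def using w(1) n by blast
    ultimately show ?thesis by blast
  qed
  show ?thesis using finF cov by blast
qed


lemma sq_split:
  fixes a b :: complex and e :: real
  assumes e: "0 < e"
  shows "(cmod a)^2 \<le> (1 + e) * (cmod b)^2 + (1 + 1/e) * (cmod (b - a))^2"
proof -
  define s where "s = cmod b"
  define t where "t = cmod (b - a)"
  have st: "0 \<le> s" "0 \<le> t" unfolding s_def t_def by auto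
  have "cmod a \<le> s + t" unfolding s_def t_def by (metis norm_triangle_ineq4 norm_minus_commute diff_diff_eq2 add.commute norm_diff_triangle_ineq diff_add_cancel norm_triangle_sub)
  then have "(cmod a)^2 \<le> (s + t)^2" by (simp add: power_mono)
  also have "\<dots> \<le> (1 + e) * s^2 + (1 + 1/e) * t^2"
  proof -
    have "0 \<le> (e * s - t)^2 / e" using e by simp
    also have "(e * s - t)^2 / e = e * s^2 - 2 * s * t + t^2 / e"
      using e by (simp add: power2_eq_square field_simps)
    finally have "2 * s * t \<le> e * s^2 + t^2 / e" by simp
    then show ?thesis by (simp add: power2_eq_square algebra_simps)
  qed
  finally show ?thesis unfolding s_def t_def .
qed

lemma limit_core:
  fixes U :: "pt \<Rightarrow> complex" and Gv :: "pt \<Rightarrow> complex^2" and \<phi> :: "nat \<Rightarrow> pt \<Rightarrow> complex"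
  assumes Um: "U \<in> borel_measurable lborel" and Gm: "Gv \<in> borel_measurable lborel"
    and Ui: "integrable lborel (\<lambda>x. (cmod (U x))^2)"
    and Gi: "\<And>i. integrable lborel (\<lambda>x. (cmod (Gv x $ i))^2)"
    and tf: "\<And>n. test_fun \<Omega> (\<phi> n)"
    and A: "(\<lambda>n. \<integral>x. (cmod (\<phi> n x - U x))^2 \<partial>lborel) \<longlonglongrightarrow> 0"
    and B: "\<And>i. (\<lambda>n. \<integral>x. (cmod (partial_d i (\<phi> n) x - Gv x $ i))^2 \<partial>lborel) \<longlonglongrightarrow> 0"
    and P: "\<And>n. (\<integral>x. (cmod (\<phi> n x))^2 \<partial>lborel) \<le> C * (\<integral>x. gsq (\<phi> n) x \<partial>lborel)"
    and C: "0 \<le> C"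
  shows "(\<integral>x. (cmod (U x))^2 \<partial>lborel) \<le> C * (\<integral>x. (\<Sum>i\<in>UNIV. (cmod (Gv x $ i))^2) \<partial>lborel)"
proof -
  have sm: "smooth_fun (\<phi> n)" for n using tf test_smooth by blast
  have Um'[measurable]: "U \<in> borel_measurable borel" using Um by simp
  have phim[measurable]: "\<phi> n \<in> borel_measurable lborel" for n
    using borel_measurable_continuous_onI[OF smooth_cont[OF sm]] by simp
  have dm[measurable]: "partial_d i (\<phi> n) \<in> borel_measurable lborel" for n i
    using borel_measurable_continuous_onI[OF smooth_partial_cont[OF sm]] by simp
  have Gim[measurable]: "(\<lambda>x. Gv x $ i) \<in> borel_measurable lborel" for i
  proof -
    have "continuous_on UNIV (\<lambda>v::complex^2. v $ i)"
      by (simp add: continuous_at_imp_continuous_on)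
    then have "(\<lambda>v::complex^2. v $ i) \<in> borel_measurable borel" by (rule borel_measurable_continuous_onI)
    then show ?thesis using measurable_compose[OF Gm] by simp
  qed
  have Gim'[measurable]: "(\<lambda>x. Gv x $ i) \<in> borel_measurable borel" for i using Gim[of i] by simp
  have phii: "integrable lborel (\<lambda>x. (cmod (\<phi> n x))^2)" for n using test_int_phi[OF tf] .
  have gsqi: "integrable lborel (gsq (\<phi> n))" for n using test_int_gsq[OF tf] .
  have di: "integrable lborel (\<lambda>x. (cmod (partial_d i (\<phi> n) x))^2)" for n i
  proof (rule Bochner_Integration.integrable_bound[OF gsqi])
    show "(\<lambda>x. (cmod (partial_d i (\<phi> n) x))^2) \<in> borel_measurable lborel" by measurable
    show "AE x in lborel. norm ((cmod (partial_d i (\<phi> n) x))^2) \<le> norm (gsq (\<phi> n) x)"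
      unfolding gsq_def by (auto intro!: member_le_sum simp: sum_nonneg)
  qed
  have Ai: "integrable lborel (\<lambda>x. (cmod (\<phi> n x - U x))^2)" for n
  proof (rule Bochner_Integration.integrable_bound[where f="\<lambda>x. 2 * (cmod (\<phi> n x))^2 + 2 * (cmod (U x))^2"])
    show "integrable lborel (\<lambda>x. 2 * (cmod (\<phi> n x))^2 + 2 * (cmod (U x))^2)"
      using phii Ui by simp
    show "(\<lambda>x. (cmod (\<phi> n x - U x))^2) \<in> borel_measurable lborel" by measurable
    show "AE x in lborel. norm ((cmod (\<phi> n x - U x))^2) \<le> norm (2 * (cmod (\<phi> n x))^2 + 2 * (cmod (U x))^2)"
    proof (intro AE_I2)
      fix x
      have "cmod (\<phi> n x - U x) \<le> cmod (\<phi> n x) + cmod (U x)" by (rule norm_triangle_ineq4)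
      then have "(cmod (\<phi> n x - U x))^2 \<le> (cmod (\<phi> n x) + cmod (U x))^2" by (simp add: power_mono)
      also have "\<dots> \<le> 2 * (cmod (\<phi> n x))^2 + 2 * (cmod (U x))^2"
        by (simp add: power2_sum) (metis add.commute mult_2 sum_squares_bound)
      finally show "norm ((cmod (\<phi> n x - U x))^2) \<le> norm (2 * (cmod (\<phi> n x))^2 + 2 * (cmod (U x))^2)" by simp
    qed
  qed
  have Bi: "integrable lborel (\<lambda>x. (cmod (partial_d i (\<phi> n) x - Gv x $ i))^2)" for n i
  proof (rule Bochner_Integration.integrable_bound[where f="\<lambda>x. 2 * (cmod (partial_d i (\<phi> n) x))^2 + 2 * (cmod (Gv x $ i))^2"])
    show "integrable lborel (\<lambda>x. 2 * (cmod (partial_d i (\<phi> n) x))^2 + 2 * (cmod (Gv x $ i))^2)"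
      using di Gi by simp
    show "(\<lambda>x. (cmod (partial_d i (\<phi> n) x - Gv x $ i))^2) \<in> borel_measurable lborel" by measurable
    show "AE x in lborel. norm ((cmod (partial_d i (\<phi> n) x - Gv x $ i))^2) \<le> norm (2 * (cmod (partial_d i (\<phi> n) x))^2 + 2 * (cmod (Gv x $ i))^2)"
    proof (intro AE_I2)
      fix x
      have "cmod (partial_d i (\<phi> n) x - Gv x $ i) \<le> cmod (partial_d i (\<phi> n) x) + cmod (Gv x $ i)" by (rule norm_triangle_ineq4)
      then have "(cmod (partial_d i (\<phi> n) x - Gv x $ i))^2 \<le> (cmod (partial_d i (\<phi> n) x) + cmod (Gv x $ i))^2" by (simp add: power_mono)
      also have "\<dots> \<le> 2 * (cmod (partial_d i (\<phi> n) x))^2 + 2 * (cmod (Gv x $ i))^2"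
        by (simp add: power2_sum) (metis add.commute mult_2 sum_squares_bound)
      finally show "norm ((cmod (partial_d i (\<phi> n) x - Gv x $ i))^2) \<le> norm (2 * (cmod (partial_d i (\<phi> n) x))^2 + 2 * (cmod (Gv x $ i))^2)" by simp
    qed
  qed
  have Bi': "integrable lborel (\<lambda>x. (cmod (Gv x $ i - partial_d i (\<phi> n) x))^2)" for n i
    using Bi[of i n] by (simp add: norm_minus_commute)
  define Uv where "Uv = (\<integral>x. (cmod (U x))^2 \<partial>lborel)"
  define Gs where "Gs i = (\<integral>x. (cmod (Gv x $ i))^2 \<partial>lborel)" for i
  have Gsum: "(\<integral>x. (\<Sum>i\<in>UNIV. (cmod (Gv x $ i))^2) \<partial>lborel) = (\<Sum>i\<in>UNIV. Gs i)"
    unfolding Gs_def by (rule Bochner_Integration.integral_sum) (rule Gi)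
  have main: "Uv \<le> (1 + e)^2 * C * (\<Sum>i\<in>UNIV. Gs i)" if e: "0 < e" for e
  proof -
    define An where "An n = (\<integral>x. (cmod (\<phi> n x - U x))^2 \<partial>lborel)" for n
    define Bn where "Bn n i = (\<integral>x. (cmod (partial_d i (\<phi> n) x - Gv x $ i))^2 \<partial>lborel)" for n i
    have bound: "Uv \<le> (1 + e) * C * (\<Sum>i\<in>UNIV. (1 + e) * Gs i + (1 + 1/e) * Bn n i) + (1 + 1/e) * An n" for n
    proof -
      have "Uv \<le> (\<integral>x. (1 + e) * (cmod (\<phi> n x))^2 + (1 + 1/e) * (cmod (\<phi> n x - U x))^2 \<partial>lborel)"
        unfolding Uv_def
        by (rule Bochner_Integration.integral_mono) (use Ui phii Ai sq_split[OF e] in auto)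
      also have "\<dots> = (1 + e) * (\<integral>x. (cmod (\<phi> n x))^2 \<partial>lborel) + (1 + 1/e) * An n"
        unfolding An_def using phii Ai by simp
      also have "(\<integral>x. (cmod (\<phi> n x))^2 \<partial>lborel) \<le> C * (\<integral>x. gsq (\<phi> n) x \<partial>lborel)" by (rule P)
      also have "(\<integral>x. gsq (\<phi> n) x \<partial>lborel) = (\<Sum>i\<in>UNIV. \<integral>x. (cmod (partial_d i (\<phi> n) x))^2 \<partial>lborel)"
        unfolding gsq_def by (rule Bochner_Integration.integral_sum) (rule di)
      also have "\<dots> \<le> (\<Sum>i\<in>UNIV. (1 + e) * Gs i + (1 + 1/e) * Bn n i)"
      proof (rule sum_mono)
        fix i :: 2
        have "(\<integral>x. (cmod (partial_d i (\<phi> n) x))^2 \<partial>lborel) \<le> (\<integral>x. (1 + e) * (cmod (Gv x $ i))^2 + (1 + 1/e) * (cmod (Gv x $ i - partial_d i (\<phi> n) x))^2 \<partial>lborel)"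
          by (rule Bochner_Integration.integral_mono) (use di Gi Bi' sq_split[OF e] in auto)
        also have "\<dots> = (1 + e) * Gs i + (1 + 1/e) * Bn n i"
          unfolding Gs_def Bn_def using Gi Bi by (simp add: norm_minus_commute)
        finally show "(\<integral>x. (cmod (partial_d i (\<phi> n) x))^2 \<partial>lborel) \<le> (1 + e) * Gs i + (1 + 1/e) * Bn n i" .
      qed
      finally show ?thesis using e C by (simp add: mult_left_mono mult.assoc)
    qed
    have lim: "(\<lambda>n. (1 + e) * C * (\<Sum>i\<in>UNIV. (1 + e) * Gs i + (1 + 1/e) * Bn n i) + (1 + 1/e) * An n)
        \<longlonglongrightarrow> (1 + e) * C * (\<Sum>i\<in>UNIV. (1 + e) * Gs i + (1 + 1/e) * 0) + (1 + 1/e) * 0"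
      unfolding An_def Bn_def by (intro tendsto_intros A B)
    have "Uv \<le> (1 + e) * C * (\<Sum>i\<in>UNIV. (1 + e) * Gs i + (1 + 1/e) * 0) + (1 + 1/e) * 0"
      by (rule LIMSEQ_le_const[OF lim]) (use bound in blast)
    also have "\<dots> = (1 + e)^2 * C * (\<Sum>i\<in>UNIV. Gs i)"
      by (simp add: power2_eq_square sum_distrib_left mult_ac)
    finally show ?thesis .
  qed
  have lim2: "(\<lambda>k. (1 + inverse (real (Suc k)))^2 * C * (\<Sum>i\<in>UNIV. Gs i)) \<longlonglongrightarrow> (1 + 0)^2 * C * (\<Sum>i\<in>UNIV. Gs i)"
    by (intro tendsto_intros LIMSEQ_inverse_real_of_nat)
  have "Uv \<le> (1 + 0)^2 * C * (\<Sum>i\<in>UNIV. Gs i)"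
    by (rule LIMSEQ_le_const[OF lim2]) (use main in auto)
  then show ?thesis unfolding Uv_def Gsum by simp
qed


lemma test_partial_zero: "test_fun \<Omega> \<phi> \<Longrightarrow> x \<notin> \<Omega> \<Longrightarrow> partial_d i \<phi> x = 0"
proof -
  assume tf: "test_fun \<Omega> \<phi>" and x: "x \<notin> \<Omega>"
  have s: "closure {x. \<phi> x \<noteq> 0} \<subseteq> \<Omega>" "smooth_fun \<phi>" using tf unfolding test_fun_def by simp_all
  then have "x \<notin> closure {x. \<phi> x \<noteq> 0}" using x by (meson subsetD)
  then show ?thesis using partial_zero s(2) by blast
qed

theorem mainTheorem2:
  fixes Ntype :: nat and D :: "nat \<Rightarrow> pt set" and Lam :: "nat \<Rightarrow> pt set"
    and c :: real and v1 v2 :: pt and M :: nat and Y :: "nat \<Rightarrow> pt set"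
    and Sig :: "nat \<Rightarrow> pt set" and K :: nat
    and DD :: "pt set" and \<Omega> :: "pt set"
  assumes shapes: "\<forall>n<Ntype. bounded (D n) \<and> open (D n) \<and> simply_connected (D n) \<and>
                     C1_boundary (D n) \<and> measure lborel (D n) = 1"
    and discr: "\<forall>n<Ntype. discrete_set (Lam n)"
    and DD_def: "DD = (\<Union>n<Ntype. \<Union>u\<in>Lam n. (+) u ` D n)"
    and Omega_def: "\<Omega> = - closure DD"
    and c_pos: "c > 0"
    and sep: "\<forall>A\<in>components DD. \<forall>B\<in>components DD. A \<noteq> B \<longrightarrow> c \<le> setdist A B"
    and latt: "\<not> collinear {0, v1, v2}"
    and polys: "\<forall>m<M. polygon (Y m)"
    and Sig_sub: "\<forall>m<M. Sig m \<subseteq> lattice_gen v1 v2"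
    and disj: "\<forall>m<M. \<forall>m'<M. \<forall>v\<in>Sig m. \<forall>v'\<in>Sig m'. (m, v) \<noteq> (m', v') \<longrightarrow>
                 ((+) v ` Y m) \<inter> ((+) v' ` Y m') = {}"
    and cover: "(\<Union>m<M. \<Union>v\<in>Sig m. closure ((+) v ` Y m)) = UNIV"
    and K_pos: "K \<ge> 1"
    and cellK: "\<forall>m<M. \<forall>v\<in>Sig m. card {A \<in> components DD. A \<subseteq> (+) v ` Y m} = K"
    and cell_cpt: "\<forall>m<M. \<forall>v\<in>Sig m. closure (((+) v ` Y m) \<inter> DD) \<subseteq> (+) v ` Y m"
    and cell_dist: "\<forall>m<M. \<forall>v\<in>Sig m. c \<le> setdist (frontier ((+) v ` Y m)) DD"
  shows "\<exists>z0>0. \<forall>u g. H10_grad \<Omega> u g \<longrightarrow>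
           (LINT x:\<Omega>|lborel. (\<Sum>i\<in>UNIV. (cmod (g x $ i))^2))
             \<ge> z0 * (LINT x:\<Omega>|lborel. (cmod (u x))^2)"
proof -
  obtain F where finF: "finite F" and covF: "\<And>x. \<exists>w\<in>F. x + w \<in> DD"
    using geom[OF shapes DD_def polys cover K_pos cellK] by blast
  define C where "C = (\<Sum>w\<in>F. (norm w)^2) + 1"
  have C0: "0 \<le> (\<Sum>w\<in>F. (norm w)^2)" by (simp add: sum_nonneg)
  then have Cpos: "0 < C" unfolding C_def by simp
  have P: "(\<integral>x. (cmod (\<phi> x))^2 \<partial>lborel) \<le> C * (\<integral>x. gsq \<phi> x \<partial>lborel)" if tf: "test_fun \<Omega> \<phi>" for \<phi>
  proof -
    have cov: "\<exists>w\<in>F. \<phi> (x + w) = 0" for x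
    proof -
      obtain w where w: "w \<in> F" "x + w \<in> DD" using covF by blast
      then have "x + w \<notin> \<Omega>" unfolding Omega_def using closure_subset by blast
      then show ?thesis using w(1) test_zero[OF tf] by blast
    qed
    have "(\<integral>x. (cmod (\<phi> x))^2 \<partial>lborel) \<le> (\<Sum>w\<in>F. (norm w)^2) * (\<integral>x. gsq \<phi> x \<partial>lborel)"
      by (rule poinc_real[OF tf finF cov])
    also have "\<dots> \<le> C * (\<integral>x. gsq \<phi> x \<partial>lborel)"
      unfolding C_def by (intro mult_right_mono) (auto intro!: Bochner_Integration.integral_nonneg simp: gsq_nonneg)
    finally show ?thesis .
  qed
  show ?thesis
  proof (intro exI[of _ "1 / C"] conjI allI impI)
    show "0 < 1 / C" using Cpos by simp
    fix u g assume H: "H10_grad \<Omega> u g"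
    define U where "U x = indicator \<Omega> x *\<^sub>R u x" for x
    define Gv where "Gv x = indicator \<Omega> x *\<^sub>R g x" for x
    have Um: "U \<in> borel_measurable lborel" and Gm: "Gv \<in> borel_measurable lborel"
      using H unfolding H10_grad_def set_borel_measurable_def U_def Gv_def by auto
    have eU: "indicator \<Omega> x *\<^sub>R (cmod (u x))^2 = (cmod (U x))^2" for x
      unfolding U_def by (cases "x \<in> \<Omega>") auto
    have eG: "indicator \<Omega> x *\<^sub>R (cmod (g x $ i))^2 = (cmod (Gv x $ i))^2" for x i
      unfolding Gv_def by (cases "x \<in> \<Omega>") auto
    have eGs: "indicator \<Omega> x *\<^sub>R (\<Sum>i\<in>UNIV. (cmod (g x $ i))^2) = (\<Sum>i\<in>UNIV. (cmod (Gv x $ i))^2)" for x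
      unfolding Gv_def by (cases "x \<in> \<Omega>") auto
    have Ui: "integrable lborel (\<lambda>x. (cmod (U x))^2)"
      using H unfolding H10_grad_def set_integrable_def eU by auto
    have Gi: "integrable lborel (\<lambda>x. (cmod (Gv x $ i))^2)" for i
      using H unfolding H10_grad_def set_integrable_def eG by auto
    obtain \<phi> where tf: "\<And>n. test_fun \<Omega> (\<phi> n)"
      and A0: "(\<lambda>n. LINT x:\<Omega>|lborel. (cmod (\<phi> n x - u x))^2) \<longlonglongrightarrow> 0"
      and B0: "\<And>i. (\<lambda>n. LINT x:\<Omega>|lborel. (cmod (partial_d i (\<phi> n) x - g x $ i))^2) \<longlonglongrightarrow> 0"
      using H unfolding H10_grad_def by blast
    have eA: "indicator \<Omega> x *\<^sub>R (cmod (\<phi> n x - u x))^2 = (cmod (\<phi> n x - U x))^2" for n x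
      unfolding U_def using test_zero[OF tf] by (cases "x \<in> \<Omega>") auto
    have eB: "indicator \<Omega> x *\<^sub>R (cmod (partial_d i (\<phi> n) x - g x $ i))^2 = (cmod (partial_d i (\<phi> n) x - Gv x $ i))^2" for n x i
      unfolding Gv_def using test_partial_zero[OF tf] by (cases "x \<in> \<Omega>") auto
    have A: "(\<lambda>n. \<integral>x. (cmod (\<phi> n x - U x))^2 \<partial>lborel) \<longlonglongrightarrow> 0"
      using A0 unfolding set_lebesgue_integral_def eA .
    have B: "(\<lambda>n. \<integral>x. (cmod (partial_d i (\<phi> n) x - Gv x $ i))^2 \<partial>lborel) \<longlonglongrightarrow> 0" for i
      using B0[of i] unfolding set_lebesgue_integral_def eB .
    have "(\<integral>x. (cmod (U x))^2 \<partial>lborel) \<le> C * (\<integral>x. (\<Sum>i\<in>UNIV. (cmod (Gv x $ i))^2) \<partial>lborel)"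
      by (rule limit_core[OF Um Gm Ui Gi tf A B P[OF tf] less_imp_le[OF Cpos]])
    then have "(LINT x:\<Omega>|lborel. (cmod (u x))^2) \<le> C * (LINT x:\<Omega>|lborel. (\<Sum>i\<in>UNIV. (cmod (g x $ i))^2))"
      unfolding set_lebesgue_integral_def eU eGs .
    then show "(LINT x:\<Omega>|lborel. (\<Sum>i\<in>UNIV. (cmod (g x $ i))^2)) \<ge> 1 / C * (LINT x:\<Omega>|lborel. (cmod (u x))^2)"
      using Cpos by (simp add: field_simps)
  qed
qed

end
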